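(* Let $k\ge2$ be an integer and $p$ an odd prime not dividing $k$. Let $$F(t)={}_{k-1}F_{k-2}\left(\tfrac1k,\tfrac2k,\ldots,\tfrac{k-1}{k};1,1,\ldots,1\,\middle|\,t\right)=\sum_{n\ge0}\frac{(\frac1k)_n(\frac2k)_n\cdots(\frac{k-1}{k})_n}{(n!)^{k-1}}t^n .$$ Then $F(t)\in\mathbb{Z}_p[[t]]$ and for all integers $s\ge1$, $$\frac{F(t)}{F(t^p)}\equiv \frac{F_{p^s}(t)}{F_{p^{s-1}}(t^p)}\pmod{p^s},$$ as power series in $\mathbb{Z}_p[[t]]$ (coefficientwise).
   Context: $(a)_n=a(a+1)\cdots(a+n-1)$ denotes the Pochhammer symbol; there are $k-1$ upper parameters $\frac1k,\dots,\frac{k-1}k$ and $k-2$ lower parameters all equal to $1$. For a power series $G(t)$ and an integer $m\ge1$, $G_m(t)$ denotes its truncation: all terms of degree $\ge m$ are deleted; $G_m(t^p)$ denotes this truncation with $t$ replaced by $t^p$. *)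

theory Defs
  imports "HOL-Computational_Algebra.Computational_Algebra"
begin

definition hyp_coeff :: "nat \<Rightarrow> nat \<Rightarrow> rat" where
  "hyp_coeff k n = (\<Prod>j\<in>{1..k-1}. pochhammer (of_nat j / of_nat k) n) / (fact n) ^ (k - 1)"

definition hypF :: "nat \<Rightarrow> rat fps" where
  "hypF k = Abs_fps (hyp_coeff k)"

text \<open>A rational number lies in Z_p (its reduced denominator is prime to p).\<close>
definition p_integral :: "nat \<Rightarrow> rat \<Rightarrow> bool" where
  "p_integral p x \<longleftrightarrow> \<not> (int p dvd snd (quotient_of x))"

definition fps_cong_mod :: "nat \<Rightarrow> nat \<Rightarrow> rat fps \<Rightarrow> rat fps \<Rightarrow> bool" where
  "fps_cong_mod p s f g \<longleftrightarrow> (\<forall>n. p_integral p ((f $ n - g $ n) / (of_nat p) ^ s))"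

end

theory Submission
  imports Defs "HOL-Number_Theory.Number_Theory"
begin
definition pint :: "nat \<Rightarrow> rat \<Rightarrow> bool" where
  "pint p x \<longleftrightarrow> (\<exists>a b::int. \<not> int p dvd b \<and> x = of_int a / of_int b)"

definition pdv :: "nat \<Rightarrow> nat \<Rightarrow> rat \<Rightarrow> bool" where
  "pdv p s x \<longleftrightarrow> (\<exists>z. pint p z \<and> x = of_nat p ^ s * z)"

lemma pint_of_int[simp]: "prime p \<Longrightarrow> pint p (of_int a)"
  unfolding pint_def
  by (rule exI[of _ a], rule exI[of _ 1]) (auto simp: prime_nat_iff)

lemma pint_of_nat[simp]: "prime p \<Longrightarrow> pint p (of_nat a)"
  using pint_of_int[of p "int a"] by simp

lemma pint_0[simp]: "prime p \<Longrightarrow> pint p 0" using pint_of_int[of p 0] by simp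
lemma pint_1[simp]: "prime p \<Longrightarrow> pint p 1" using pint_of_int[of p 1] by simp

lemma prime_int_not_dvd_mult:
  assumes "prime p" "\<not> int p dvd b" "\<not> int p dvd d" shows "\<not> int p dvd (b * d)"
  using assms by (simp add: prime_dvd_mult_iff)

lemma pint_add[intro]: assumes "prime p" "pint p x" "pint p y" shows "pint p (x + y)"
proof -
  obtain a b c d where x: "\<not> int p dvd b" "x = of_int a / of_int b"
    and y: "\<not> int p dvd d" "y = of_int c / of_int d" using assms unfolding pint_def by blast
  have b0: "b \<noteq> 0" "d \<noteq> 0" using x y by auto
  have "x + y = of_int (a*d + c*b) / of_int (b*d)" using b0 x y by (simp add: field_simps)
  moreover have "\<not> int p dvd (b*d)" using assms(1) x y prime_int_not_dvd_mult by blast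
  ultimately show ?thesis unfolding pint_def by blast
qed

lemma pint_mult[intro]: assumes "prime p" "pint p x" "pint p y" shows "pint p (x * y)"
proof -
  obtain a b c d where x: "\<not> int p dvd b" "x = of_int a / of_int b"
    and y: "\<not> int p dvd d" "y = of_int c / of_int d" using assms unfolding pint_def by blast
  have "x * y = of_int (a*c) / of_int (b*d)" using x y by simp
  moreover have "\<not> int p dvd (b*d)" using assms(1) x y prime_int_not_dvd_mult by blast
  ultimately show ?thesis unfolding pint_def by blast
qed

lemma pint_uminus[intro]: assumes "pint p x" shows "pint p (- x)"
proof -
  obtain a b where x: "\<not> int p dvd b" "x = of_int a / of_int b"
    using assms unfolding pint_def by blast
  have "- x = of_int (- a) / of_int b" using x by simp
  then show ?thesis using x unfolding pint_def by blast
qed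

lemma pint_diff[intro]: "prime p \<Longrightarrow> pint p x \<Longrightarrow> pint p y \<Longrightarrow> pint p (x - y)"
  using pint_add[of p x "- y"] pint_uminus[of p y] by simp

lemma pint_div_int: assumes "prime p" "pint p x" "\<not> int p dvd d" shows "pint p (x / of_int d)"
proof -
  obtain a b where x: "\<not> int p dvd b" "x = of_int a / of_int b"
    using assms unfolding pint_def by blast
  have "x / of_int d = of_int a / of_int (b * d)" using x by simp
  moreover have "\<not> int p dvd (b*d)" using assms x prime_int_not_dvd_mult by blast
  ultimately show ?thesis unfolding pint_def by blast
qed

lemma pint_sum: "prime p \<Longrightarrow> (\<And>i. i \<in> A \<Longrightarrow> pint p (f i)) \<Longrightarrow> pint p (\<Sum>i\<in>A. f i)"
  by (induction A rule: infinite_finite_induct) auto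

lemma pint_prod: "prime p \<Longrightarrow> (\<And>i. i \<in> A \<Longrightarrow> pint p (f i)) \<Longrightarrow> pint p (\<Prod>i\<in>A. f i)"
  by (induction A rule: infinite_finite_induct) auto

lemma p_integral_iff: assumes "prime p" shows "p_integral p x \<longleftrightarrow> pint p x"
proof
  assume "p_integral p x"
  then show "pint p x" unfolding p_integral_def pint_def
    by (metis prod.collapse quotient_of_div)
next
  assume "pint p x"
  then obtain a b where x: "\<not> int p dvd b" "x = of_int a / of_int b" unfolding pint_def by blast
  obtain c d where q: "quotient_of x = (c, d)" by (cases "quotient_of x")
  have d: "d > 0" "coprime c d" using q quotient_of_denom_pos quotient_of_coprime by blast+
  have b0: "b \<noteq> 0" using x by auto
  have "of_int a / of_int b = (of_int c / of_int d :: rat)" using x q quotient_of_div by metis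
  then have "rat_of_int a * rat_of_int d = rat_of_int c * rat_of_int b" using b0 d
    by (subst (asm) frac_eq_eq) auto
  then have "a * d = c * b" by (simp flip: of_int_mult)
  then have "c * b = a * d" by simp
  then have "d dvd c * b" by simp
  then have "d dvd b" using d(2) by (simp add: coprime_commute coprime_dvd_mult_right_iff)
  then have "\<not> int p dvd d" using x dvd_trans by blast
  then show "p_integral p x" unfolding p_integral_def using q by simp
qed

lemma pdv_pint: "pdv p s x \<Longrightarrow> prime p \<Longrightarrow> pint p x"
  unfolding pdv_def by (metis of_nat_power pint_mult pint_of_nat)

lemma pdv_0_iff: "pdv p 0 x \<longleftrightarrow> pint p x" unfolding pdv_def by simp

lemma pdv_zero[simp]: "prime p \<Longrightarrow> pdv p s 0" unfolding pdv_def by (intro exI[of _ 0]) simp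

lemma pdv_add: assumes "prime p" "pdv p s x" "pdv p s y" shows "pdv p s (x + y)"
proof -
  obtain z w where zw: "pint p z" "x = of_nat p ^ s * z" "pint p w" "y = of_nat p ^ s * w"
    using assms unfolding pdv_def by blast
  have "x + y = of_nat p ^ s * (z + w)" using zw by (simp add: distrib_left)
  then show ?thesis unfolding pdv_def using assms(1) zw by blast
qed

lemma pdv_uminus: assumes "pdv p s x" shows "pdv p s (- x)"
  using assms unfolding pdv_def by (metis mult_minus_right pint_uminus)

lemma pdv_diff: "prime p \<Longrightarrow> pdv p s x \<Longrightarrow> pdv p s y \<Longrightarrow> pdv p s (x - y)"
  using pdv_add[of p s x "- y"] pdv_uminus[of p s y] by simp

lemma pdv_sum: "prime p \<Longrightarrow> (\<And>i. i \<in> A \<Longrightarrow> pdv p s (f i)) \<Longrightarrow> pdv p s (\<Sum>i\<in>A. f i)"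
  by (induction A rule: infinite_finite_induct) (auto intro: pdv_add)

lemma pdv_mult_pint: assumes "prime p" "pdv p s x" "pint p y" shows "pdv p s (x * y)" "pdv p s (y * x)"
proof -
  obtain z where z: "pint p z" "x = of_nat p ^ s * z" using assms unfolding pdv_def by blast
  have "x * y = of_nat p ^ s * (z * y)" "y * x = of_nat p ^ s * (z * y)" using z by simp_all
  moreover have "pint p (z * y)" using z assms by blast
  ultimately show "pdv p s (x * y)" "pdv p s (y * x)" unfolding pdv_def by metis+
qed

lemma pdv_mult: assumes "prime p" "pdv p a x" "pdv p b y" shows "pdv p (a + b) (x * y)"
proof -
  obtain z w where zw: "pint p z" "x = of_nat p ^ a * z" "pint p w" "y = of_nat p ^ b * w"
    using assms unfolding pdv_def by blast
  have "x * y = of_nat p ^ (a + b) * (z * w)" using zw by (simp add: power_add)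
  moreover have "pint p (z * w)" using zw assms by blast
  ultimately show ?thesis unfolding pdv_def by blast
qed

lemma pdv_mono: assumes "prime p" "s \<le> t" "pdv p t x" shows "pdv p s x"
proof -
  obtain z where z: "pint p z" "x = of_nat p ^ t * z" using assms unfolding pdv_def by blast
  have "x = of_nat p ^ s * (of_nat p ^ (t - s) * z)" using z assms(2)
    by (simp add: power_add[symmetric])
  moreover have "pint p (of_nat p ^ (t - s) * z)" using z assms(1)
    by (metis of_nat_power pint_mult pint_of_nat)
  ultimately show ?thesis unfolding pdv_def by blast
qed

lemma pdv_times_p: assumes "pdv p s x" shows "pdv p (Suc s) (of_nat p * x)"
proof -
  obtain z where z: "pint p z" "x = of_nat p ^ s * z" using assms unfolding pdv_def by blast
  have "of_nat p * x = of_nat p ^ Suc s * z" using z by simp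
  then show ?thesis unfolding pdv_def using z by blast
qed

lemma pdv_div_p: assumes "prime p" "pdv p (Suc s) x" shows "pdv p s (x / of_nat p)"
proof -
  obtain z where z: "pint p z" "x = of_nat p ^ Suc s * z" using assms unfolding pdv_def by blast
  have "p \<noteq> 0" using assms(1) by auto
  then have "x / of_nat p = of_nat p ^ s * z" using z by simp
  then show ?thesis unfolding pdv_def using z by blast
qed

lemma pdv_div_int: assumes "prime p" "pdv p s x" "\<not> int p dvd d" shows "pdv p s (x / of_int d)"
proof -
  obtain z where z: "pint p z" "x = of_nat p ^ s * z" using assms unfolding pdv_def by blast
  have "x / of_int d = of_nat p ^ s * (z / of_int d)" using z by simp
  moreover have "pint p (z / of_int d)" using z assms pint_div_int by blast
  ultimately show ?thesis unfolding pdv_def by blast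
qed

lemma pdv_of_int: assumes "prime p" "int p ^ s dvd a" shows "pdv p s (of_int a)"
proof -
  obtain c where c: "a = int p ^ s * c" using assms by (auto elim: dvdE)
  have "rat_of_int a = of_nat p ^ s * of_int c" using c by simp
  then show ?thesis unfolding pdv_def using assms(1) by (metis pint_of_int)
qed

lemma sum_group_nat:
  fixes f :: "nat \<Rightarrow> 'a::comm_monoid_add"
  shows "(\<Sum>j<N * p. f j) = (\<Sum>j1<N. \<Sum>j0<p. f (j0 + p * j1))"
proof -
  have "(\<Sum>j<N * p. f j) = (\<Sum>m<N. \<Sum>j\<in>{m*p..<m*p+p}. f j)"
    by (rule sum.nat_group[symmetric])
  also have "\<dots> = (\<Sum>m<N. \<Sum>j0<p. f (j0 + p * m))"
  proof (rule sum.cong[OF refl])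
    fix m
    have "{m*p..<m*p+p} = (\<lambda>j0. j0 + p * m) ` {..<p}"
    proof (intro equalityI subsetI)
      fix x assume "x \<in> {m*p..<m*p+p}"
      then show "x \<in> (\<lambda>j0. j0 + p * m) ` {..<p}"
        by (intro image_eqI[of _ _ "x - m * p"]) (auto simp: mult.commute)
    qed (auto simp: mult.commute)
    moreover have "inj_on (\<lambda>j0. j0 + p * m) {..<p}" by (auto simp: inj_on_def)
    ultimately show "(\<Sum>j\<in>{m*p..<m*p+p}. f j) = (\<Sum>j0<p. f (j0 + p * m))"
      by (simp add: sum.reindex)
  qed
  finally show ?thesis .
qed

lemma mod_shift_lemma:
  fixes p :: nat
  assumes "i mod p ^ r = i' mod p ^ r"
  shows "(a + p * i) mod p ^ Suc r = (a + p * i') mod p ^ Suc r"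
proof -
  have "(p * i) mod p ^ Suc r = (p * i') mod p ^ Suc r"
    using assms by (simp add: mod_mult_mult1)
  then show ?thesis by (metis mod_add_right_eq)
qed

lemma sum_reflect: "(\<Sum>j\<in>{lo..hi::nat}. f j) = (\<Sum>j\<in>{lo..hi}. f (lo + hi - j))"
  using sum.atLeastAtMost_rev[of f lo hi] by (simp only: add.commute)

definition goodpsi :: "nat \<Rightarrow> (nat \<Rightarrow> nat \<Rightarrow> rat) \<Rightarrow> bool" where
  "goodpsi p \<Psi> \<longleftrightarrow> (\<forall>i j. \<Psi> j i = - \<Psi> i j) \<and> (\<forall>i j. pint p (\<Psi> i j)) \<and>
     (\<forall>r i j i' j'. i mod p ^ r = i' mod p ^ r \<longrightarrow> j mod p ^ r = j' mod p ^ r \<longrightarrow>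
         pdv p (Suc r) (\<Psi> i j - \<Psi> i' j'))"

lemma goodpsi_pdv1:
  assumes "prime p" "goodpsi p \<Psi>" shows "pdv p 1 (\<Psi> i j)"
proof -
  have "\<Psi> 0 0 = - \<Psi> 0 0" using assms(2) unfolding goodpsi_def by blast
  then have z: "\<Psi> 0 0 = 0" by simp
  have "pdv p (Suc 0) (\<Psi> i j - \<Psi> 0 0)" using assms(2) unfolding goodpsi_def
    by (metis mod_by_1 power_0)
  then show ?thesis using z by simp
qed

definition DS :: "nat \<Rightarrow> (nat \<Rightarrow> rat) \<Rightarrow> (nat \<Rightarrow> nat \<Rightarrow> rat) \<Rightarrow> nat \<Rightarrow> nat \<Rightarrow> rat" where
  "DS p A \<Psi> s M = (\<Sum>j<p ^ s. if j \<le> M then A (M - j) * A j * \<Psi> (M - j) j else 0)"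

definition psi' :: "nat \<Rightarrow> (nat \<Rightarrow> rat) \<Rightarrow> (nat \<Rightarrow> nat \<Rightarrow> rat) \<Rightarrow> nat \<Rightarrow> nat \<Rightarrow> nat \<Rightarrow> nat \<Rightarrow> rat" where
  "psi' p g \<Psi> lo hi i1 j1 = (\<Sum>j0\<in>{lo..hi}. g ((lo + hi - j0) + p * i1) * g (j0 + p * j1) *
        \<Psi> ((lo + hi - j0) + p * i1) (j0 + p * j1)) / of_nat p"

locale dwork =
  fixes p :: nat and A g :: "nat \<Rightarrow> rat"
  assumes prime: "prime p"
    and hA: "\<And>n. A n = g n * A (n div p)"
    and hAi: "\<And>n. pint p (A n)"
    and hg: "\<And>n. pint p (g n)"
    and hgc: "\<And>r n n'. n mod p ^ Suc r = n' mod p ^ Suc r \<Longrightarrow> pdv p (Suc r) (g n - g n')"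
begin

lemma goodpsi_step:
  assumes "goodpsi p \<Psi>"
  shows "goodpsi p (psi' p g \<Psi> lo hi)"
proof -
  have p1: "\<And>i j. pdv p 1 (\<Psi> i j)" using goodpsi_pdv1[OF prime assms] .
  have anti: "\<And>i j. \<Psi> j i = - \<Psi> i j" using assms unfolding goodpsi_def by blast
  have c2: "\<And>r i j i' j'. i mod p ^ r = i' mod p ^ r \<Longrightarrow> j mod p ^ r = j' mod p ^ r \<Longrightarrow>
         pdv p (Suc r) (\<Psi> i j - \<Psi> i' j')" using assms unfolding goodpsi_def by blast
  let ?d = "lo + hi"
  have A1: "psi' p g \<Psi> lo hi j1 i1 = - psi' p g \<Psi> lo hi i1 j1" for i1 j1
  proof -
    have "(\<Sum>j0\<in>{lo..hi}. g ((?d - j0) + p * j1) * g (j0 + p * i1) * \<Psi> ((?d - j0) + p * j1) (j0 + p * i1))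
        = (\<Sum>j0\<in>{lo..hi}. g ((?d - (?d - j0)) + p * j1) * g ((?d - j0) + p * i1) *
              \<Psi> ((?d - (?d - j0)) + p * j1) ((?d - j0) + p * i1))"
      by (rule sum_reflect)
    also have "\<dots> = (\<Sum>j0\<in>{lo..hi}. - (g ((?d - j0) + p * i1) * g (j0 + p * j1) *
              \<Psi> ((?d - j0) + p * i1) (j0 + p * j1)))"
    proof (rule sum.cong[OF refl])
      fix j0 assume "j0 \<in> {lo..hi}"
      then have "?d - (?d - j0) = j0" by auto
      then show "g ((?d - (?d - j0)) + p * j1) * g ((?d - j0) + p * i1) *
              \<Psi> ((?d - (?d - j0)) + p * j1) ((?d - j0) + p * i1) =
           - (g ((?d - j0) + p * i1) * g (j0 + p * j1) * \<Psi> ((?d - j0) + p * i1) (j0 + p * j1))"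
        using anti[of "(?d - j0) + p * i1" "j0 + p * j1"] by simp
    qed
    finally show ?thesis unfolding psi'_def by (simp add: sum_negf)
  qed
  have P: "pint p (psi' p g \<Psi> lo hi i1 j1)" for i1 j1
  proof -
    have "pdv p (Suc 0) (\<Sum>j0\<in>{lo..hi}. g ((?d - j0) + p * i1) * g (j0 + p * j1) *
        \<Psi> ((?d - j0) + p * i1) (j0 + p * j1))"
      using p1 by (intro pdv_sum[OF prime] pdv_mult_pint(2)[OF prime] pint_mult[OF prime] hg) simp
    then show ?thesis unfolding psi'_def using pdv_div_p[OF prime] pdv_0_iff by blast
  qed
  have C: "pdv p (Suc r) (psi' p g \<Psi> lo hi i1 j1 - psi' p g \<Psi> lo hi i1' j1')"
    if h: "i1 mod p ^ r = i1' mod p ^ r" "j1 mod p ^ r = j1' mod p ^ r" for r i1 j1 i1' j1'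
  proof -
    have T: "pdv p (Suc (Suc r)) (g x * g y * \<Psi> x y - g x' * g y' * \<Psi> x' y')"
      if hx: "x mod p ^ Suc r = x' mod p ^ Suc r" and hy: "y mod p ^ Suc r = y' mod p ^ Suc r"
      for x y x' y'
    proof -
      have gx: "pdv p (Suc r) (g x - g x')" and gy: "pdv p (Suc r) (g y - g y')"
        using hgc[OF hx] hgc[OF hy] by auto
      have ps: "pdv p (Suc (Suc r)) (\<Psi> x y - \<Psi> x' y')" using c2 hx hy by blast
      have e1: "pdv p (Suc r) (g x * g y - g x' * g y')"
      proof -
        have "g x * g y - g x' * g y' = (g x - g x') * g y + g x' * (g y - g y')"
          by (simp add: algebra_simps)
        moreover have "pdv p (Suc r) ((g x - g x') * g y)" using pdv_mult_pint(1)[OF prime gx hg] .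
        moreover have "pdv p (Suc r) (g x' * (g y - g y'))" using pdv_mult_pint(2)[OF prime gy hg] .
        ultimately show ?thesis using pdv_add[OF prime] by simp
      qed
      have e2: "pdv p (Suc r + 1) ((g x * g y - g x' * g y') * \<Psi> x y)"
        using pdv_mult[OF prime e1 p1] .
      have e3: "pdv p (Suc (Suc r)) (g x' * g y' * (\<Psi> x y - \<Psi> x' y'))"
        using pdv_mult_pint(2)[OF prime ps] hg pint_mult[OF prime] by blast
      have "g x * g y * \<Psi> x y - g x' * g y' * \<Psi> x' y'
          = (g x * g y - g x' * g y') * \<Psi> x y + g x' * g y' * (\<Psi> x y - \<Psi> x' y')"
        by (simp add: algebra_simps)
      then show ?thesis using e2 e3 pdv_add[OF prime] by simp
    qed
    have "pdv p (Suc (Suc r))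
        ((\<Sum>j0\<in>{lo..hi}. g ((?d - j0) + p * i1) * g (j0 + p * j1) * \<Psi> ((?d - j0) + p * i1) (j0 + p * j1))
       - (\<Sum>j0\<in>{lo..hi}. g ((?d - j0) + p * i1') * g (j0 + p * j1') * \<Psi> ((?d - j0) + p * i1') (j0 + p * j1')))"
      unfolding sum_subtractf[symmetric]
      by (intro pdv_sum[OF prime] T mod_shift_lemma h)
    then have "pdv p (Suc r) ((
        (\<Sum>j0\<in>{lo..hi}. g ((?d - j0) + p * i1) * g (j0 + p * j1) * \<Psi> ((?d - j0) + p * i1) (j0 + p * j1))
       - (\<Sum>j0\<in>{lo..hi}. g ((?d - j0) + p * i1') * g (j0 + p * j1') * \<Psi> ((?d - j0) + p * i1') (j0 + p * j1')))
       / of_nat p)"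
      using pdv_div_p[OF prime] by blast
    then show ?thesis unfolding psi'_def by (simp add: diff_divide_distrib)
  qed
  show ?thesis unfolding goodpsi_def using A1 P C by blast
qed

end

lemma ar0: fixes p :: nat assumes "j0 \<le> c" "j1 \<le> q"
  shows "j0 + p*j1 \<le> c + p*q" "c + p*q - (j0 + p*j1) = (c - j0) + p*(q - j1)"
proof -
  obtain d where d: "q = j1 + d" using assms(2) le_Suc_ex by blast
  show "j0 + p*j1 \<le> c + p*q" using assms d by (simp add: algebra_simps)
  show "c + p*q - (j0 + p*j1) = (c - j0) + p*(q - j1)" using assms d by (simp add: algebra_simps)
qed

lemma ar0': fixes p :: nat assumes "c < p" "q < j1" shows "\<not> j0 + p*j1 \<le> c + p*q"
proof -
  have "p * Suc q \<le> p * j1" using assms by (metis Suc_leI mult_le_mono2)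
  moreover have "p * Suc q = p + p * q" by simp
  ultimately show ?thesis using assms by linarith
qed

lemma ar1: fixes p :: nat assumes "c < j0" "j0 < p" "j1 < q"
  shows "j0 + p*j1 \<le> c + p*q" "c + p*q - (j0 + p*j1) = (c + p - j0) + p*(q - 1 - j1)"
proof -
  obtain d where d: "q = Suc (j1 + d)" using assms(3) less_iff_Suc_add by blast
  show "j0 + p*j1 \<le> c + p*q" using assms d by (simp add: algebra_simps)
  show "c + p*q - (j0 + p*j1) = (c + p - j0) + p*(q - 1 - j1)" using assms d by (simp add: algebra_simps)
qed

lemma ar1': fixes p :: nat assumes "c < j0" "q \<le> j1" shows "\<not> j0 + p*j1 \<le> c + p*q"
proof -
  have "p * q \<le> p * j1" using assms by (metis mult_le_mono2)
  then show ?thesis using assms by linarith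
qed

lemma div_small: fixes p :: nat assumes "a < p" shows "(a + p * b) div p = b"
  using assms by simp

context dwork
begin

lemma p_pos: "p > 0" using prime by (simp add: prime_gt_0_nat)

lemma inner0:
  assumes "j0 \<le> c" "c < p"
  shows "(if j0 + p*j1 \<le> c + p*q then A (c + p*q - (j0 + p*j1)) * A (j0 + p*j1) *
            \<Psi> (c + p*q - (j0 + p*j1)) (j0 + p*j1) else 0) =
         (if j1 \<le> q then A (q - j1) * A j1 * (g ((0 + c - j0) + p * (q - j1)) * g (j0 + p * j1) *
            \<Psi> ((0 + c - j0) + p * (q - j1)) (j0 + p * j1)) else 0)"
proof (cases "j1 \<le> q")
  case True
  note e = ar0[OF assms(1) True, of p]
  have d1: "((c - j0) + p * (q - j1)) div p = q - j1" using assms by (intro div_small) simp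
  have d2: "(j0 + p * j1) div p = j1" using assms by (intro div_small) simp
  have "A ((c - j0) + p * (q - j1)) = g ((c - j0) + p * (q - j1)) * A (q - j1)"
    using hA[of "(c - j0) + p * (q - j1)"] d1 by simp
  moreover have "A (j0 + p * j1) = g (j0 + p * j1) * A j1" using hA[of "j0 + p * j1"] d2 by simp
  ultimately show ?thesis using True e by simp
next
  case False
  then show ?thesis using ar0'[OF assms(2), of q j1 j0] by simp
qed

lemma inner1:
  assumes "c < j0" "j0 < p"
  shows "(if j0 + p*j1 \<le> c + p*q then A (c + p*q - (j0 + p*j1)) * A (j0 + p*j1) *
            \<Psi> (c + p*q - (j0 + p*j1)) (j0 + p*j1) else 0) =
         (if j1 < q then A (q - 1 - j1) * A j1 * (g ((Suc c + (p - 1) - j0) + p * (q - 1 - j1)) * g (j0 + p * j1) *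
            \<Psi> ((Suc c + (p - 1) - j0) + p * (q - 1 - j1)) (j0 + p * j1)) else 0)"
proof (cases "j1 < q")
  case True
  note e = ar1[OF assms True]
  have cc: "Suc c + (p - 1) - j0 = c + p - j0" using assms by simp
  have d1: "((c + p - j0) + p * (q - 1 - j1)) div p = q - 1 - j1" using assms by (intro div_small) simp
  have d2: "(j0 + p * j1) div p = j1" using assms by (intro div_small) simp
  have "A ((c + p - j0) + p * (q - 1 - j1)) = g ((c + p - j0) + p * (q - 1 - j1)) * A (q - 1 - j1)"
    using hA[of "(c + p - j0) + p * (q - 1 - j1)"] d1 by simp
  moreover have "A (j0 + p * j1) = g (j0 + p * j1) * A j1" using hA[of "j0 + p * j1"] d2 by simp
  ultimately show ?thesis using True e cc by simp
next
  case False
  then show ?thesis using ar1'[OF assms(1), of q j1 p] by simp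
qed

lemma split_sum_p:
  fixes h :: "nat \<Rightarrow> rat"
  assumes "c < p"
  shows "(\<Sum>j0<p. h j0) = (\<Sum>j0\<in>{0..c}. h j0) + (\<Sum>j0\<in>{Suc c..p-1}. h j0)"
proof -
  have "{..<p} = {0..c} \<union> {Suc c..p-1}" using assms by auto
  moreover have "{0..c} \<inter> {Suc c..p-1} = {}" by auto
  ultimately show ?thesis by (simp add: sum.union_disjoint)
qed

lemma dwork_main: "goodpsi p \<Psi> \<Longrightarrow> pdv p (Suc s) (DS p A \<Psi> s M)"
proof (induction s arbitrary: \<Psi> M)
  case 0
  have "DS p A \<Psi> 0 M = A M * A 0 * \<Psi> M 0" unfolding DS_def by simp
  moreover have "pdv p (Suc 0) (\<Psi> M 0)" using goodpsi_pdv1[OF prime 0] by simp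
  ultimately show ?case using pdv_mult_pint(2)[OF prime _ pint_mult[OF prime hAi hAi]] by simp
next
  case (Suc s)
  define c where "c = M mod p"
  define q where "q = M div p"
  have M: "M = c + p * q" unfolding c_def q_def by simp
  have cp: "c < p" unfolding c_def using p_pos by simp
  define \<Psi>0 where "\<Psi>0 = psi' p g \<Psi> 0 c"
  define \<Psi>1 where "\<Psi>1 = psi' p g \<Psi> (Suc c) (p - 1)"
  have g0: "goodpsi p \<Psi>0" unfolding \<Psi>0_def by (rule goodpsi_step[OF Suc.prems])
  have g1: "goodpsi p \<Psi>1" unfolding \<Psi>1_def by (rule goodpsi_step[OF Suc.prems])
  define f where "f j = (if j \<le> M then A (M - j) * A j * \<Psi> (M - j) j else 0)" for j
  define X0 where "X0 j1 = (if j1 \<le> q then A (q - j1) * A j1 * (of_nat p * \<Psi>0 (q - j1) j1) else 0)" for j1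
  define X1 where "X1 j1 = (if j1 < q then A (q - 1 - j1) * A j1 * (of_nat p * \<Psi>1 (q - 1 - j1) j1) else 0)" for j1
  have inner: "(\<Sum>j0<p. f (j0 + p * j1)) = X0 j1 + X1 j1" for j1
  proof -
    have a: "(\<Sum>j0\<in>{0..c}. f (j0 + p * j1)) = X0 j1"
    proof -
      define G where "G j0 = g ((0 + c - j0) + p * (q - j1)) * g (j0 + p * j1) *
            \<Psi> ((0 + c - j0) + p * (q - j1)) (j0 + p * j1)" for j0
      have "(\<Sum>j0\<in>{0..c}. f (j0 + p * j1)) =
          (\<Sum>j0\<in>{0..c}. if j1 \<le> q then A (q - j1) * A j1 * G j0 else 0)"
        unfolding f_def G_def M using inner0[OF _ cp] by (intro sum.cong) auto
      also have "\<dots> = (if j1 \<le> q then A (q - j1) * A j1 * (\<Sum>j0\<in>{0..c}. G j0) else 0)"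
        by (simp add: sum_distrib_left)
      also have "(\<Sum>j0\<in>{0..c}. G j0) = of_nat p * \<Psi>0 (q - j1) j1"
        unfolding G_def \<Psi>0_def psi'_def using p_pos by simp
      finally show ?thesis unfolding X0_def .
    qed
    have b: "(\<Sum>j0\<in>{Suc c..p-1}. f (j0 + p * j1)) = X1 j1"
    proof -
      define G where "G j0 = g ((Suc c + (p - 1) - j0) + p * (q - 1 - j1)) * g (j0 + p * j1) *
            \<Psi> ((Suc c + (p - 1) - j0) + p * (q - 1 - j1)) (j0 + p * j1)" for j0
      have "(\<Sum>j0\<in>{Suc c..p-1}. f (j0 + p * j1)) =
          (\<Sum>j0\<in>{Suc c..p-1}. if j1 < q then A (q - 1 - j1) * A j1 * G j0 else 0)"
      proof (intro sum.cong refl)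
        fix j0 assume "j0 \<in> {Suc c..p-1}"
        then have "c < j0" "j0 < p" using p_pos by auto
        then show "f (j0 + p * j1) = (if j1 < q then A (q - 1 - j1) * A j1 * G j0 else 0)"
          unfolding f_def G_def M using inner1 by simp
      qed
      also have "\<dots> = (if j1 < q then A (q - 1 - j1) * A j1 * (\<Sum>j0\<in>{Suc c..p-1}. G j0) else 0)"
        by (simp add: sum_distrib_left)
      also have "(\<Sum>j0\<in>{Suc c..p-1}. G j0) = of_nat p * \<Psi>1 (q - 1 - j1) j1"
        unfolding G_def \<Psi>1_def psi'_def using p_pos by simp
      finally show ?thesis unfolding X1_def .
    qed
    show ?thesis using split_sum_p[OF cp, of "\<lambda>j0. f (j0 + p * j1)"] a b by simp
  qed
  have "DS p A \<Psi> (Suc s) M = (\<Sum>j<p ^ s * p. f j)" unfolding DS_def f_def power_Suc2 by (rule refl)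
  also have "\<dots> = (\<Sum>j1<p ^ s. \<Sum>j0<p. f (j0 + p * j1))" by (rule sum_group_nat)
  also have "\<dots> = (\<Sum>j1<p ^ s. X0 j1) + (\<Sum>j1<p ^ s. X1 j1)"
    by (simp add: inner sum.distrib)
  finally have eq: "DS p A \<Psi> (Suc s) M = (\<Sum>j1<p ^ s. X0 j1) + (\<Sum>j1<p ^ s. X1 j1)" .
  have s0: "(\<Sum>j1<p ^ s. X0 j1) = of_nat p * DS p A \<Psi>0 s q"
    unfolding DS_def X0_def sum_distrib_left by (intro sum.cong refl) (auto simp: algebra_simps)
  have t0: "pdv p (Suc (Suc s)) (\<Sum>j1<p ^ s. X0 j1)"
    unfolding s0 using pdv_times_p[OF Suc.IH[OF g0]] .
  have t1: "pdv p (Suc (Suc s)) (\<Sum>j1<p ^ s. X1 j1)"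
  proof (cases "q = 0")
    case True
    then show ?thesis unfolding X1_def using prime by simp
  next
    case False
    have "(\<Sum>j1<p ^ s. X1 j1) = of_nat p * DS p A \<Psi>1 s (q - 1)"
      unfolding DS_def X1_def sum_distrib_left
    proof (intro sum.cong refl)
      fix j1 show "(if j1 < q then A (q - 1 - j1) * A j1 * (of_nat p * \<Psi>1 (q - 1 - j1) j1) else 0) =
        of_nat p * (if j1 \<le> q - 1 then A (q - 1 - j1) * A j1 * \<Psi>1 (q - 1 - j1) j1 else 0)"
        using False by (auto simp: algebra_simps)
    qed
    then show ?thesis using pdv_times_p[OF Suc.IH[OF g1]] by simp
  qed
  show ?case unfolding eq using pdv_add[OF prime t0 t1] .
qed

end

definition Aseq :: "nat \<Rightarrow> nat \<Rightarrow> rat" where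
  "Aseq k n = fact (k * n) / (fact n ^ k * of_nat k ^ (k * n))"

definition gseq :: "nat \<Rightarrow> nat \<Rightarrow> nat \<Rightarrow> rat" where
  "gseq k p n = Aseq k n / Aseq k (n div p)"

definition phi :: "nat \<Rightarrow> nat \<Rightarrow> nat" where
  "phi p x = (\<Prod>i\<in>{1..x}. if p dvd i then 1 else i)"

definition Pf :: "nat \<Rightarrow> nat \<Rightarrow> nat \<Rightarrow> nat" where
  "Pf k p n = (\<Prod>t\<in>{1..(k * (n mod p)) div p}. p * (k * (n div p) + t))"

definition Nn :: "nat \<Rightarrow> nat \<Rightarrow> nat \<Rightarrow> nat" where
  "Nn k p n = Pf k p n * phi p (k * n)"

definition Dn :: "nat \<Rightarrow> nat \<Rightarrow> nat \<Rightarrow> nat" where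
  "Dn k p n = phi p n ^ k * k ^ (k * (n - n div p))"

lemma fact_add_prod: "fact (m + e) = (fact m :: nat) * (\<Prod>t\<in>{1..e}. m + t)"
  by (induction e) (simp_all add: atLeastAtMostSuc_conv algebra_simps)

lemma phi_Suc: "phi p (Suc x) = phi p x * (if p dvd Suc x then 1 else Suc x)"
  unfolding phi_def by (simp add: atLeastAtMostSuc_conv)

lemma phi_0[simp]: "phi p 0 = 1" unfolding phi_def by simp

lemma fact_phi:
  assumes "p > 0"
  shows "fact x = p ^ (x div p) * fact (x div p) * (phi p x :: nat)"
proof (induction x)
  case 0 then show ?case by simp
next
  case (Suc x)
  show ?case
  proof (cases "p dvd Suc x")
    case True
    then have d: "Suc x div p = Suc (x div p)" using assms by (simp add: div_Suc dvd_eq_mod_eq_0)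
    have e: "Suc x = p * Suc (x div p)" using True d by (metis dvd_mult_div_cancel)
    have "fact (Suc x) = Suc x * (fact x :: nat)" by simp
    also have "\<dots> = p * Suc (x div p) * (fact x :: nat)" by (simp only: e)
    also have "\<dots> = p * Suc (x div p) * (p ^ (x div p) * fact (x div p) * phi p x)" using Suc by simp
    also have "\<dots> = p ^ (Suc x div p) * fact (Suc x div p) * phi p (Suc x)"
      using True d by (simp add: phi_Suc algebra_simps)
    finally show ?thesis .
  next
    case False
    then have d: "Suc x div p = x div p" using assms by (simp add: div_Suc dvd_eq_mod_eq_0)
    have "fact (Suc x) = Suc x * (fact x :: nat)" by simp
    also have "\<dots> = p ^ (Suc x div p) * fact (Suc x div p) * phi p (Suc x)"
      using Suc False d by (simp add: phi_Suc algebra_simps)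
    finally show ?thesis .
  qed
qed

lemma Pf_eq: "Pf k p n = p ^ ((k * (n mod p)) div p) * (\<Prod>t\<in>{1..(k * (n mod p)) div p}. k * (n div p) + t)"
  unfolding Pf_def by (simp add: prod.distrib)

lemma Aseq_pos: "k > 0 \<Longrightarrow> Aseq k n > 0"
  unfolding Aseq_def by (simp add: fact_gt_zero)

lemma g_formula:
  assumes "prime p" "k > 0"
  shows "gseq k p n = of_nat (Nn k p n) / of_nat (Dn k p n)"
proof -
  have p0: "p > 0" using assms prime_gt_0_nat by blast
  define u where "u = n div p"
  define v where "v = n mod p"
  define e where "e = (k * v) div p"
  define Q where "Q = (\<Prod>t\<in>{1..e}. k * u + t)"
  define Fk where "Fk = (fact (k * u) :: nat)"
  define Fu where "Fu = (fact u :: nat)"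
  have n: "n = v + p * u" unfolding u_def v_def by simp
  have h1: "k * n div p = k * u + e"
  proof -
    have "k * n = k * v + p * (k * u)" using n by (simp add: algebra_simps)
    then show ?thesis unfolding e_def using p0 by simp
  qed
  have h2: "fact (k * n) = p ^ (k * u + e) * Fk * Q * phi p (k * n)"
    using fact_phi[OF p0, of "k * n"] h1 fact_add_prod[of "k * u" e] unfolding Fk_def Q_def
    by simp
  have h3: "fact n = p ^ u * Fu * phi p n" using fact_phi[OF p0, of n] unfolding Fu_def u_def by simp
  have h4: "Pf k p n = p ^ e * Q" unfolding Pf_eq e_def Q_def u_def v_def ..
  have un: "u \<le> n" unfolding u_def by simp
  have h5: "k ^ (k * n) = k ^ (k * u) * k ^ (k * (n - u))"
    using un by (simp add: power_add[symmetric] algebra_simps)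
  have Nn: "Nn k p n = p ^ e * Q * phi p (k * n)" unfolding Nn_def h4 ..
  have Dn: "Dn k p n = phi p n ^ k * k ^ (k * (n - u))" unfolding Dn_def u_def ..
  have pos: "Fk > 0" "Fu > 0" "Q > 0" "phi p n > 0" "phi p (k*n) > 0"
    unfolding Fk_def Fu_def Q_def phi_def by (auto intro!: prod_pos)
  have A1: "Aseq k n = of_nat (p ^ (k * u + e) * Fk * Q * phi p (k * n)) /
      (of_nat (p ^ u * Fu * phi p n) ^ k * of_nat (k ^ (k * u) * k ^ (k * (n - u))))"
    unfolding Aseq_def using h2 h3 h5 by (metis of_nat_fact of_nat_power)
  have A2: "Aseq k u = of_nat Fk / (of_nat Fu ^ k * of_nat (k ^ (k * u)))"
    unfolding Aseq_def Fk_def Fu_def by simp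
  have "gseq k p n = Aseq k n / Aseq k u" unfolding gseq_def u_def ..
  also have "\<dots> = of_nat (p ^ e * Q * phi p (k * n)) / of_nat (phi p n ^ k * k ^ (k * (n - u)))"
    unfolding A1 A2 using pos p0 assms(2)
    by (simp add: field_simps power_mult_distrib power_add power_mult[symmetric] mult.commute[of u k])
  finally show ?thesis unfolding Nn Dn .
qed

lemma phi_shift:
  assumes "p dvd L"
  shows "[phi p (x + L) = phi p x * phi p L] (mod L)"
proof (induction x)
  case 0 then show ?case by simp
next
  case (Suc x)
  have f: "[(if p dvd Suc (x + L) then 1 else Suc (x + L)) = (if p dvd Suc x then 1 else Suc x)] (mod L)"
  proof -
    have "p dvd Suc x + L \<longleftrightarrow> p dvd Suc x" using dvd_add_left_iff[OF assms, of "Suc x"] .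
    then have "p dvd Suc (x + L) \<longleftrightarrow> p dvd Suc x" by simp
    moreover have "[Suc (x + L) = Suc x] (mod L)" unfolding cong_def
      by (simp only: add_Suc[symmetric] mod_add_self2)
    ultimately show ?thesis by simp
  qed
  have "phi p (Suc x + L) = phi p (x + L) * (if p dvd Suc (x + L) then 1 else Suc (x + L))"
    using phi_Suc[of p "x + L"] by simp
  also have "[\<dots> = phi p x * phi p L * (if p dvd Suc x then 1 else Suc x)] (mod L)"
    using Suc f by (rule cong_mult)
  also have "phi p x * phi p L * (if p dvd Suc x then 1 else Suc x) = phi p (Suc x) * phi p L"
    by (simp add: phi_Suc)
  finally show ?case .
qed

lemma phi_shift_m:
  assumes "p dvd L"
  shows "[phi p (x + m * L) = phi p x * phi p L ^ m] (mod L)"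
proof (induction m)
  case 0 then show ?case by simp
next
  case (Suc m)
  have "phi p (x + Suc m * L) = phi p ((x + m * L) + L)" by (simp add: algebra_simps)
  also have "[\<dots> = phi p (x + m * L) * phi p L] (mod L)" by (rule phi_shift[OF assms])
  also have "[phi p (x + m * L) * phi p L = phi p x * phi p L ^ m * phi p L] (mod L)"
    using Suc by (rule cong_scalar_right)
  also have "phi p x * phi p L ^ m * phi p L = phi p x * phi p L ^ Suc m" by simp
  finally show ?case .
qed

lemma phi_not_dvd: assumes "prime p" shows "\<not> p dvd phi p x"
proof
  assume "p dvd phi p x"
  then have "\<exists>i\<in>{1..x}. p dvd (if p dvd i then 1 else i)"
    unfolding phi_def by (subst (asm) prime_dvd_prod_iff[OF finite_atLeastAtMost assms])
  then obtain i where "p dvd (if p dvd i then 1 else i)" by blast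
  moreover have "\<not> p dvd 1" using assms by (simp add: prime_nat_iff)
  ultimately show False by (cases "p dvd i") simp_all
qed

lemma Dn_not_dvd: assumes "prime p" "\<not> p dvd k" shows "\<not> p dvd Dn k p n"
proof
  assume "p dvd Dn k p n"
  then have "p dvd phi p n ^ k \<or> p dvd k ^ (k * (n - n div p))"
    unfolding Dn_def using prime_dvd_mult_iff[OF assms(1)] by blast
  then have "p dvd phi p n \<or> p dvd k" using prime_dvd_power[OF assms(1)] by blast
  then show False using phi_not_dvd[OF assms(1)] assms(2) by blast
qed

lemma gseq_pint:
  assumes "prime p" "\<not> p dvd k" "k > 0"
  shows "pint p (gseq k p n)"
proof -
  have "gseq k p n = of_int (int (Nn k p n)) / of_int (int (Dn k p n))"
    using g_formula[OF assms(1,3)] by simp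
  moreover have "\<not> int p dvd int (Dn k p n)" using Dn_not_dvd[OF assms(1,2)] by simp
  ultimately show ?thesis unfolding pint_def by blast
qed

lemma ND_cong:
  assumes "prime p" "\<not> p dvd k" "k > 0"
  shows "[Nn k p n * Dn k p (n + m * p ^ Suc r) = Nn k p (n + m * p ^ Suc r) * Dn k p n] (mod p ^ Suc r)"
proof -
  define L where "L = p ^ Suc r"
  define n' where "n' = n + m * L"
  define u where "u = n div p"
  define e where "e = (k * (n mod p)) div p"
  define \<omega> where "\<omega> = phi p L"
  have p0: "p > 0" using assms prime_gt_0_nat by blast
  have pL: "p dvd L" unfolding L_def by simp
  have L: "L = p * p ^ r" unfolding L_def by simp
  have m1: "n' mod p = n mod p"
  proof -
    have "n' = n + (m * p ^ r) * p" unfolding n'_def L by (simp add: algebra_simps)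
    then show ?thesis by (simp only: mod_mult_self1)
  qed
  have d1: "n' div p = u + m * p ^ r"
  proof -
    have "n' = n + (m * p ^ r) * p" unfolding n'_def L by (simp add: algebra_simps)
    then show ?thesis unfolding u_def using p0 by (simp only: div_mult_self1)
  qed
  have un: "u \<le> n" unfolding u_def by simp
  have Pf': "[Pf k p n' = Pf k p n] (mod L)"
  proof -
    have "Pf k p n' = (\<Prod>t\<in>{1..e}. p * (k * (u + m * p ^ r) + t))"
      unfolding Pf_def m1 d1 e_def ..
    also have "[\<dots> = (\<Prod>t\<in>{1..e}. p * (k * u + t))] (mod L)"
    proof (rule cong_prod)
      fix t
      have "p * (k * (u + m * p ^ r) + t) = p * (k * u + t) + (k * m) * L"
        unfolding L by (simp add: algebra_simps)
      then show "[p * (k * (u + m * p ^ r) + t) = p * (k * u + t)] (mod L)"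
        by (simp add: cong_def)
    qed
    also have "(\<Prod>t\<in>{1..e}. p * (k * u + t)) = Pf k p n" unfolding Pf_def e_def u_def ..
    finally show ?thesis .
  qed
  have ph1: "[phi p (k * n') = phi p (k * n) * \<omega> ^ (k * m)] (mod L)"
  proof -
    have "k * n' = k * n + (k * m) * L" unfolding n'_def by (simp add: algebra_simps)
    then show ?thesis unfolding \<omega>_def using phi_shift_m[OF pL, of "k * n" "k * m"] by simp
  qed
  have ph2: "[phi p n' ^ k = phi p n ^ k * \<omega> ^ (k * m)] (mod L)"
  proof -
    have "[phi p n' ^ k = (phi p n * \<omega> ^ m) ^ k] (mod L)"
      unfolding n'_def \<omega>_def by (intro cong_pow phi_shift_m[OF pL])
    moreover have "(phi p n * \<omega> ^ m) ^ k = phi p n ^ k * \<omega> ^ (k * m)"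
      by (metis power_mult power_mult_distrib mult.commute)
    ultimately show ?thesis by simp
  qed
  have tot: "totient L = p ^ r * (p - 1)" unfolding L_def using totient_prime_power_Suc[OF assms(1)] .
  have nu: "n' - n' div p = (n - u) + m * totient L"
  proof -
    have "n' - n' div p = n + m * (p * p ^ r) - (u + m * p ^ r)" unfolding d1 unfolding n'_def L ..
    also have "\<dots> = (n - u) + m * (p ^ r * (p - 1))"
      using un p0 by (simp add: algebra_simps diff_mult_distrib2)
    finally show ?thesis unfolding tot .
  qed
  have cop: "coprime k L" unfolding L_def using assms
    by (metis coprime_commute coprime_power_right_iff prime_imp_coprime)
  have kp: "[k ^ (k * (n' - n' div p)) = k ^ (k * (n - u))] (mod L)"
  proof -
    have "k ^ (k * (n' - n' div p)) = k ^ (k * (n - u)) * (k ^ totient L) ^ (k * m)"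
    proof -
      have "k * ((n - u) + m * totient L) = k * (n - u) + totient L * (k * m)"
        by (simp add: algebra_simps)
      then have "k ^ (k * ((n - u) + m * totient L)) = k ^ (k * (n - u)) * k ^ (totient L * (k * m))"
        by (simp only: power_add)
      then show ?thesis unfolding nu by (simp only: power_mult)
    qed
    also have "[\<dots> = k ^ (k * (n - u)) * 1 ^ (k * m)] (mod L)"
      by (intro cong_scalar_left cong_pow euler_theorem cop)
    finally show ?thesis by simp
  qed
  have "Nn k p n * Dn k p n' = Pf k p n * phi p (k * n) * (phi p n' ^ k * k ^ (k * (n' - n' div p)))"
    unfolding Nn_def Dn_def ..
  also have "[\<dots> = Pf k p n * phi p (k * n) * ((phi p n ^ k * \<omega> ^ (k * m)) * k ^ (k * (n - u)))] (mod L)"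
    by (intro cong_scalar_left cong_mult ph2 kp)
  finally have c1: "[Nn k p n * Dn k p n' = Pf k p n * phi p (k * n) * ((phi p n ^ k * \<omega> ^ (k * m)) * k ^ (k * (n - u)))] (mod L)" .
  have "Nn k p n' * Dn k p n = Pf k p n' * phi p (k * n') * (phi p n ^ k * k ^ (k * (n - u)))"
    unfolding Nn_def Dn_def u_def ..
  also have "[\<dots> = Pf k p n * (phi p (k * n) * \<omega> ^ (k * m)) * (phi p n ^ k * k ^ (k * (n - u)))] (mod L)"
    by (intro cong_mult Pf' ph1 cong_refl)
  finally have c2: "[Nn k p n' * Dn k p n = Pf k p n * (phi p (k * n) * \<omega> ^ (k * m)) * (phi p n ^ k * k ^ (k * (n - u)))] (mod L)" .
  have eq: "Pf k p n * phi p (k * n) * ((phi p n ^ k * \<omega> ^ (k * m)) * k ^ (k * (n - u))) =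
      Pf k p n * (phi p (k * n) * \<omega> ^ (k * m)) * (phi p n ^ k * k ^ (k * (n - u)))"
    by (simp add: algebra_simps)
  show ?thesis using c1 c2 eq unfolding L_def[symmetric] n'_def[symmetric]
    by (metis cong_sym cong_trans)
qed

lemma gseq_cong_shift:
  assumes "prime p" "\<not> p dvd k" "k > 0"
  shows "pdv p (Suc r) (gseq k p n - gseq k p (n + m * p ^ Suc r))"
proof -
  define n' where "n' = n + m * p ^ Suc r"
  define N where "N = Nn k p n"
  define N' where "N' = Nn k p n'"
  define D where "D = Dn k p n"
  define D' where "D' = Dn k p n'"
  have nD: "\<not> p dvd D" "\<not> p dvd D'" unfolding D_def D'_def using Dn_not_dvd[OF assms(1,2)] by auto
  then have D0: "D \<noteq> 0" "D' \<noteq> 0" by (metis dvd_0_right)+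
  have c: "[N * D' = N' * D] (mod p ^ Suc r)" unfolding N_def N'_def D_def D'_def n'_def
    using ND_cong[OF assms] .
  then have "[int (N * D') = int (N' * D)] (mod int (p ^ Suc r))" by (simp only: cong_int_iff)
  then have dv: "int p ^ Suc r dvd int (N * D') - int (N' * D)"
    by (simp add: cong_iff_dvd_diff)
  have eq: "gseq k p n - gseq k p n' = of_int (int (N * D') - int (N' * D)) / of_int (int (D * D'))"
    unfolding g_formula[OF assms(1,3)] N_def N'_def D_def[symmetric] D'_def[symmetric]
    using D0 by (simp add: field_simps)
  have "\<not> int p dvd int (D * D')" using nD prime_dvd_mult_iff[OF assms(1)] by (simp only: int_dvd_int_iff) blast
  then show ?thesis unfolding n'_def[symmetric] eq
    using pdv_div_int[OF assms(1) pdv_of_int[OF assms(1) dv]] by blast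
qed

lemma gseq_cong:
  assumes "prime p" "\<not> p dvd k" "k > 0" "n mod p ^ Suc r = n' mod p ^ Suc r"
  shows "pdv p (Suc r) (gseq k p n - gseq k p n')"
proof -
  have key: "pdv p (Suc r) (gseq k p a - gseq k p b)"
    if "a \<le> b" "b mod p ^ Suc r = a mod p ^ Suc r" for a b
  proof -
    have "p ^ Suc r dvd b - a" using that mod_eq_dvd_iff_nat by blast
    then obtain m where "b - a = p ^ Suc r * m" by (auto elim: dvdE)
    then have "b = a + m * p ^ Suc r" using that(1) by (simp add: algebra_simps)
    then show ?thesis using gseq_cong_shift[OF assms(1-3)] by simp
  qed
  show ?thesis
  proof (cases "n \<le> n'")
    case True then show ?thesis using key assms(4) by simp
  next
    case False
    then have "pdv p (Suc r) (gseq k p n' - gseq k p n)" using key assms(4) by simp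
    then have "pdv p (Suc r) (- (gseq k p n' - gseq k p n))" by (rule pdv_uminus)
    then show ?thesis by simp
  qed
qed

lemma Aseq_rec: assumes "k > 0" shows "Aseq k n = gseq k p n * Aseq k (n div p)"
  using Aseq_pos[OF assms, of "n div p"] unfolding gseq_def by simp

lemma Aseq_pint:
  assumes "prime p" "\<not> p dvd k" "k > 0"
  shows "pint p (Aseq k n)"
proof (induction n rule: less_induct)
  case (less n)
  show ?case
  proof (cases "n = 0")
    case True then show ?thesis unfolding Aseq_def using assms(1) by simp
  next
    case False
    have p1: "p > 1" using assms(1) prime_gt_1_nat by blast
    then have "n div p < n" using False by simp
    then have "pint p (Aseq k (n div p))" by (rule less.IH)
    then show ?thesis using Aseq_rec[OF assms(3), of n p] gseq_pint[OF assms] pint_mult[OF assms(1)] by simp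
  qed
qed

lemma dwork_inst:
  assumes "prime p" "\<not> p dvd k" "k > 0"
  shows "dwork p (Aseq k) (gseq k p)"
  using assms by unfold_locales
    (auto intro: Aseq_rec Aseq_pint gseq_pint gseq_cong)

lemma hyp_coeff_eq:
  assumes "k > 0"
  shows "hyp_coeff k n = Aseq k n"
proof (induction n)
  case 0 then show ?case unfolding hyp_coeff_def Aseq_def by simp
next
  case (Suc n)
  define P where "P = (\<Prod>j\<in>{1..k-1}. rat_of_nat (k * n + j))"
  have kk: "{1..k} = insert k {1..k-1}" using assms by auto
  have s1: "(\<Prod>j\<in>{1..k-1}. (of_nat j / of_nat k + of_nat n :: rat)) = P / of_nat k ^ (k - 1)"
  proof -
    have "(\<Prod>j\<in>{1..k-1}. (of_nat j / of_nat k + of_nat n :: rat)) =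
        (\<Prod>j\<in>{1..k-1}. rat_of_nat (k * n + j) / of_nat k)"
      using assms by (intro prod.cong refl) (simp add: field_simps)
    also have "\<dots> = P / of_nat k ^ (k - 1)" unfolding P_def by (simp add: prod_dividef)
    finally show ?thesis .
  qed
  have fk: "fact (k * Suc n) = (fact (k * n) :: rat) * (P * (of_nat k * of_nat (Suc n)))"
  proof -
    have "fact (k * Suc n) = (fact (k * n + k) :: nat)" by (simp add: algebra_simps)
    also have "\<dots> = fact (k * n) * (\<Prod>t\<in>{1..k}. k * n + t)" by (rule fact_add_prod)
    finally have "(fact (k * Suc n) :: rat) = of_nat (fact (k * n) * (\<Prod>t\<in>{1..k}. k * n + t))"
      by (metis of_nat_fact)
    also have "\<dots> = fact (k * n) * (\<Prod>t\<in>{1..k}. rat_of_nat (k * n + t))" by simp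
    also have "(\<Prod>t\<in>{1..k}. rat_of_nat (k * n + t)) = rat_of_nat (k * n + k) * P"
      unfolding P_def kk by (subst prod.insert) auto
    also have "rat_of_nat (k * n + k) = of_nat k * of_nat (Suc n)" by (simp add: algebra_simps)
    finally show ?thesis by (simp add: algebra_simps)
  qed
  have "hyp_coeff k (Suc n) = hyp_coeff k n * ((\<Prod>j\<in>{1..k-1}. (of_nat j / of_nat k + of_nat n :: rat)) /
      of_nat (Suc n) ^ (k - 1))"
  proof -
    have a: "(\<Prod>j\<in>{1..k-1}. pochhammer (of_nat j / of_nat k :: rat) (Suc n)) =
        (\<Prod>j\<in>{1..k-1}. pochhammer (of_nat j / of_nat k :: rat) n) *
        (\<Prod>j\<in>{1..k-1}. (of_nat j / of_nat k + of_nat n :: rat))"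
      by (simp add: pochhammer_Suc prod.distrib)
    have b: "(fact (Suc n) :: rat) ^ (k - 1) = fact n ^ (k - 1) * of_nat (Suc n) ^ (k - 1)"
      by (simp only: fact_Suc power_mult_distrib mult.commute)
    show ?thesis unfolding hyp_coeff_def a b by (simp only: times_divide_times_eq)
  qed
  also have "\<dots> = Aseq k n * (P / of_nat k ^ (k - 1) / of_nat (Suc n) ^ (k - 1))"
    unfolding Suc s1 ..
  also have "\<dots> = Aseq k (Suc n)"
  proof -
    have k1: "k = Suc (k - 1)" using assms by simp
    have e1: "of_nat k ^ (k * Suc n) = (of_nat k ^ (k * n) :: rat) * of_nat k * of_nat k ^ (k - 1)"
    proof -
      have x: "k * Suc n = k * n + Suc (k - 1)" using assms by simp
      show ?thesis unfolding x power_add power_Suc by (simp only: mult_ac)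
    qed
    have e2: "(fact (Suc n) :: rat) ^ k = fact n ^ k * of_nat (Suc n) * of_nat (Suc n) ^ (k - 1)"
    proof -
      have "(fact (Suc n) :: rat) ^ k = of_nat (Suc n) ^ k * fact n ^ k"
        by (simp only: fact_Suc power_mult_distrib)
      moreover have "(of_nat (Suc n) :: rat) ^ k = of_nat (Suc n) * of_nat (Suc n) ^ (k - 1)"
        using assms by (cases k) simp_all
      ultimately show ?thesis by (simp only: mult_ac)
    qed
    have alg: "a / (b * c) * (P / d / e) = a * (P * (x * y)) / ((b * y * e) * (c * x * d))"
      if "x \<noteq> 0" "y \<noteq> 0" "b \<noteq> 0" "c \<noteq> 0" "d \<noteq> 0" "e \<noteq> 0" for a b c d e x y P :: rat
      using that by (simp add: field_simps)
    show ?thesis unfolding Aseq_def fk e1 e2 using assms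
      by (intro alg) auto
  qed
  finally show ?case .
qed

lemma compose_Xp_nth:
  assumes "p > 0"
  shows "(f oo fps_X ^ p) $ n = (if p dvd n then f $ (n div p) else (0::'a::comm_ring_1))"
proof -
  have "(f oo fps_X ^ p) $ n = (\<Sum>i\<in>{0..n}. f $ i * (fps_X ^ (p * i)) $ n)"
    unfolding fps_compose_nth by (simp add: power_mult)
  also have "\<dots> = (\<Sum>i\<in>{0..n}. if i = n div p \<and> p dvd n then f $ i else 0)"
  proof (intro sum.cong refl)
    fix i assume "i \<in> {0..n}"
    have "(n = p * i) \<longleftrightarrow> (i = n div p \<and> p dvd n)" using assms by auto
    then show "f $ i * (fps_X ^ (p * i)) $ n = (if i = n div p \<and> p dvd n then f $ i else 0)"
      by (simp add: fps_X_power_nth)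
  qed
  also have "\<dots> = (if p dvd n then f $ (n div p) else 0)"
  proof (cases "p dvd n")
    case True
    have "n div p \<in> {0..n}" by simp
    then show ?thesis using True by (simp add: sum.delta')
  qed simp
  finally show ?thesis .
qed

lemma inverse_constructor_pint:
  assumes "prime p" "\<And>n. pint p (f $ n)"
  shows "pint p (fps_right_inverse_constructor f 1 n)"
proof (induction n rule: less_induct)
  case (less n)
  show ?case
  proof (cases n)
    case 0 then show ?thesis using assms by simp
  next
    case (Suc m)
    have "pint p (\<Sum>i\<in>{1..Suc m}. f $ i * fps_right_inverse_constructor f 1 (Suc m - i))"
      using less Suc assms by (intro pint_sum pint_mult) auto
    moreover have "fps_right_inverse_constructor f 1 (Suc m) =
        - (\<Sum>i\<in>{1..Suc m}. f $ i * fps_right_inverse_constructor f 1 (Suc m - i))"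
      by (simp del: sum.cl_ivl_Suc)
    ultimately show ?thesis unfolding Suc by (metis pint_uminus)
  qed
qed

lemma inverse_pint:
  assumes "prime p" "f $ 0 = (1::rat)" "\<And>n. pint p (f $ n)"
  shows "pint p (inverse f $ n)"
  using inverse_constructor_pint[OF assms(1,3)] assms(2) by (simp add: fps_inverse_def)

lemma mult_pint:
  assumes "prime p" "\<And>n. pint p (f $ n)" "\<And>n. pint p (g $ n)"
  shows "pint p ((f * g) $ n)"
  unfolding fps_mult_nth using assms by (intro pint_sum pint_mult) auto

lemma mult_pdv:
  assumes "prime p" "\<And>n. pdv p s (f $ n)" "\<And>n. pint p (g $ n)"
  shows "pdv p s ((f * g) $ n)"
  unfolding fps_mult_nth using assms by (intro pdv_sum pdv_mult_pint(1)) auto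

lemma small_iff:
  fixes p :: nat assumes "a < p" shows "a + p * i < p * P \<longleftrightarrow> i < P"
proof
  assume "a + p * i < p * P"
  then have "p * i < p * P" by linarith
  then show "i < P" by simp
next
  assume "i < P"
  then have "Suc i \<le> P" by simp
  then have "p * Suc i \<le> p * P" by (rule mult_le_mono2)
  then show "a + p * i < p * P" using assms by simp
qed

lemma coeff_main:
  assumes pr: "prime p" and nk: "\<not> p dvd k" and k0: "k > 0"
  defines "F \<equiv> Abs_fps (Aseq k)"
  shows "pdv p (Suc s) ((F * (fps_cutoff (p ^ s) F oo fps_X ^ p) - fps_cutoff (p ^ Suc s) F * (F oo fps_X ^ p)) $ N)"
proof -
  interpret D: dwork p "Aseq k" "gseq k p" by (rule dwork_inst[OF pr nk k0])
  have p0: "p > 0" using pr prime_gt_0_nat by blast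
  define A where "A = Aseq k"
  define P where "P = p ^ s"
  define a where "a = N mod p"
  define M where "M = N div p"
  have N: "N = a + p * M" unfolding a_def M_def by simp
  have ap: "a < p" unfolding a_def using p0 by simp
  define H where "H = fps_cutoff P F oo fps_X ^ p"
  define G where "G = F oo fps_X ^ p"
  have Hn: "H $ m = (if p dvd m then (if m div p < P then A (m div p) else 0) else 0)" for m
    unfolding H_def compose_Xp_nth[OF p0] F_def A_def by simp
  have Gn: "G $ m = (if p dvd m then A (m div p) else 0)" for m
    unfolding G_def compose_Xp_nth[OF p0] F_def A_def by simp
  define \<phi> where "\<phi> i = A i * H $ (N - i) - (if i < p * P then A i else 0) * G $ (N - i)" for i
  have c1: "(F * H - fps_cutoff (p * P) F * G) $ N = (\<Sum>i\<in>{0..N}. \<phi> i)"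
    unfolding fps_sub_nth fps_mult_nth sum_subtractf[symmetric] \<phi>_def F_def A_def by (simp cong: if_cong)
  have c2: "(\<Sum>i\<in>{0..N}. \<phi> i) = (\<Sum>i\<in>(\<lambda>i'. a + p * i') ` {0..M}. \<phi> i)"
  proof (rule sum.mono_neutral_right)
    show "finite {0..N}" by simp
    show "(\<lambda>i'. a + p * i') ` {0..M} \<subseteq> {0..N}" unfolding N by auto
    show "\<forall>i\<in>{0..N} - (\<lambda>i'. a + p * i') ` {0..M}. \<phi> i = 0"
    proof
      fix i assume i: "i \<in> {0..N} - (\<lambda>i'. a + p * i') ` {0..M}"
      have "\<not> p dvd (N - i)"
      proof
        assume "p dvd (N - i)"
        then obtain c where c: "N - i = p * c" by (auto elim: dvdE)
        have iN: "i \<le> N" using i by simp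
        then have "N = i + p * c" using c by simp
        then have "i mod p = a" unfolding a_def by simp
        then have "i = a + p * (i div p)" by (metis div_mult_mod_eq add.commute mult.commute)
        moreover have "i div p \<le> M" unfolding M_def using iN by (rule div_le_mono)
        ultimately have "i \<in> (\<lambda>i'. a + p * i') ` {0..M}" by auto
        then show False using i by blast
      qed
      then show "\<phi> i = 0" unfolding \<phi>_def Hn Gn by simp
    qed
  qed
  have c3: "(\<Sum>i\<in>(\<lambda>i'. a + p * i') ` {0..M}. \<phi> i) = (\<Sum>i'\<in>{0..M}. \<phi> (a + p * i'))"
    using p0 by (subst sum.reindex) (auto simp: inj_on_def)
  define h where "h i = gseq k p (a + p * i)" for i
  have c4: "\<phi> (a + p * i') = h i' * A i' * (if M - i' < P then A (M - i') else 0)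
               - h i' * A i' * (if i' < P then A (M - i') else 0)" if "i' \<in> {0..M}" for i'
  proof -
    have e: "N - (a + p * i') = p * (M - i')" unfolding N using that by (simp add: diff_mult_distrib2)
    have A1: "A (a + p * i') = h i' * A i'"
      unfolding A_def h_def using D.hA[of "a + p * i'"] div_small[OF ap] by simp
    show ?thesis unfolding \<phi>_def e Hn Gn A1 small_iff[OF ap] using p0 by simp
  qed
  define X where "X j = A (M - j) * A j * (h (M - j) - h j)" for j
  have c5: "(\<Sum>i'\<in>{0..M}. \<phi> (a + p * i')) = (\<Sum>j\<in>{0..M}. if j < P then X j else 0)"
  proof -
    have "(\<Sum>i'\<in>{0..M}. \<phi> (a + p * i')) =
        (\<Sum>i'\<in>{0..M}. h i' * A i' * (if M - i' < P then A (M - i') else 0)) -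
        (\<Sum>i'\<in>{0..M}. h i' * A i' * (if i' < P then A (M - i') else 0))"
      unfolding sum_subtractf[symmetric] by (intro sum.cong refl c4)
    also have "(\<Sum>i'\<in>{0..M}. h i' * A i' * (if M - i' < P then A (M - i') else 0)) =
        (\<Sum>j\<in>{0..M}. h (M - j) * A (M - j) * (if j < P then A j else 0))"
    proof -
      have "(\<Sum>i'\<in>{0..M}. h i' * A i' * (if M - i' < P then A (M - i') else 0)) =
          (\<Sum>j\<in>{0..M}. h (M + 0 - j) * A (M + 0 - j) * (if M - (M + 0 - j) < P then A (M - (M + 0 - j)) else 0))"
        by (rule sum.atLeastAtMost_rev)
      also have "\<dots> = (\<Sum>j\<in>{0..M}. h (M - j) * A (M - j) * (if j < P then A j else 0))"
        by (intro sum.cong refl) auto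
      finally show ?thesis .
    qed
    also have "(\<Sum>j\<in>{0..M}. h (M - j) * A (M - j) * (if j < P then A j else 0)) -
        (\<Sum>i'\<in>{0..M}. h i' * A i' * (if i' < P then A (M - i') else 0)) =
        (\<Sum>j\<in>{0..M}. if j < P then X j else 0)"
      unfolding sum_subtractf[symmetric] X_def by (intro sum.cong refl) (auto simp: algebra_simps)
    finally show ?thesis .
  qed
  have c6: "(\<Sum>j\<in>{0..M}. if j < P then X j else 0) = DS p A (\<lambda>i j. h i - h j) s M"
  proof -
    have "(\<Sum>j\<in>{0..M}. if j < P then X j else 0) = sum X ({0..M} \<inter> {..<P})"
      by (simp add: sum.inter_restrict)
    also have "\<dots> = sum X ({..<P} \<inter> {0..M})" by (simp add: Int_commute)
    also have "\<dots> = (\<Sum>j<P. if j \<le> M then X j else 0)"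
      by (simp add: sum.inter_restrict)
    also have "\<dots> = DS p A (\<lambda>i j. h i - h j) s M" unfolding DS_def X_def P_def ..
    finally show ?thesis .
  qed
  have good: "goodpsi p (\<lambda>i j. h i - h j)"
    unfolding goodpsi_def
  proof (intro conjI allI impI)
    fix i j show "h j - h i = - (h i - h j)" by simp
  next
    fix i j show "pint p (h i - h j)" unfolding h_def using D.hg pr by blast
  next
    fix r i j i' j'
    assume "i mod p ^ r = i' mod p ^ r" "j mod p ^ r = j' mod p ^ r"
    then have "pdv p (Suc r) (h i - h i')" "pdv p (Suc r) (h j - h j')"
      unfolding h_def using D.hgc mod_shift_lemma by blast+
    then have "pdv p (Suc r) ((h i - h i') - (h j - h j'))" by (rule pdv_diff[OF pr])
    then show "pdv p (Suc r) (h i - h j - (h i' - h j'))" by (simp add: algebra_simps)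
  qed
  have "pdv p (Suc s) (DS p A (\<lambda>i j. h i - h j) s M)"
    unfolding A_def by (rule D.dwork_main[OF good[unfolded A_def]])
  moreover have "p ^ Suc s = p * P" unfolding P_def by simp
  ultimately show ?thesis using c1 c2 c3 c5 c6 unfolding H_def G_def P_def by simp
qed

theorem mainTheorem2:
  fixes k p :: nat
  assumes "k \<ge> 2" and "prime p" and "odd p" and "\<not> p dvd k"
  shows "(\<forall>n. p_integral p (hypF k $ n)) \<and>
         (\<forall>s\<ge>1. fps_cong_mod p s
            (hypF k / (hypF k oo fps_X ^ p))
            (fps_cutoff (p ^ s) (hypF k) / (fps_cutoff (p ^ (s - 1)) (hypF k) oo fps_X ^ p)))"
proof -
  have k0: "k > 0" using assms(1) by simp
  have pr: "prime p" by fact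
  have p0: "p > 0" using pr prime_gt_0_nat by blast
  define F where "F = Abs_fps (Aseq k)"
  have hc: "hyp_coeff k = Aseq k" by (rule ext, rule hyp_coeff_eq[OF k0])
  have hF: "hypF k = F" unfolding hypF_def F_def hc ..
  have Fp: "pint p (F $ n)" for n unfolding F_def using Aseq_pint[OF pr assms(4) k0] by simp
  have F0: "F $ 0 = 1" unfolding F_def Aseq_def by simp
  have part1: "\<forall>n. p_integral p (hypF k $ n)"
    unfolding hF p_integral_iff[OF pr] using Fp by blast
  have part2: "fps_cong_mod p s (F / (F oo fps_X ^ p))
            (fps_cutoff (p ^ s) F / (fps_cutoff (p ^ (s - 1)) F oo fps_X ^ p))" if s1: "s \<ge> 1" for s
  proof -
    obtain s' where s: "s = Suc s'" using s1 by (cases s) auto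
    define G where "G = F oo fps_X ^ p"
    define H where "H = fps_cutoff (p ^ s') F oo fps_X ^ p"
    define Fs where "Fs = fps_cutoff (p ^ Suc s') F"
    have G0: "G $ 0 = 1" unfolding G_def using F0 by simp
    have H0: "H $ 0 = 1" unfolding H_def using F0 p0 by simp
    have Gp: "pint p (G $ n)" for n unfolding G_def compose_Xp_nth[OF p0] using Fp pr by simp
    have Hp: "pint p (H $ n)" for n unfolding H_def compose_Xp_nth[OF p0] using Fp pr by simp
    have iGp: "pint p (inverse G $ n)" for n using inverse_pint[OF pr G0 Gp] .
    have iHp: "pint p (inverse H $ n)" for n using inverse_pint[OF pr H0 Hp] .
    have Ip: "pint p ((inverse G * inverse H) $ n)" for n using mult_pint[OF pr iGp iHp] .
    have Dp: "pdv p (Suc s') ((F * H - Fs * G) $ n)" for n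
      unfolding F_def H_def Fs_def G_def using coeff_main[OF pr assms(4) k0] by blast
    have eq: "F / G - Fs / H = (F * H - Fs * G) * (inverse G * inverse H)"
    proof -
      have a: "G * inverse G = 1" using G0 by (intro inverse_mult_eq_1') simp
      have b: "H * inverse H = 1" using H0 by (intro inverse_mult_eq_1') simp
      have "(F * H - Fs * G) * (inverse G * inverse H) =
          F * inverse G * (H * inverse H) - Fs * inverse H * (G * inverse G)"
        by (simp add: algebra_simps)
      also have "\<dots> = F * inverse G - Fs * inverse H" unfolding a b by simp
      also have "\<dots> = F / G - Fs / H" using G0 H0 by (simp add: fps_divide_unit)
      finally show ?thesis by simp
    qed
    have "pdv p s ((F / G - Fs / H) $ n)" for n
      unfolding eq s using mult_pdv[OF pr Dp Ip] .
    then have "pint p (((F / G) $ n - (Fs / H) $ n) / of_nat p ^ s)" for n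
    proof -
      obtain z where z: "pint p z" "(F / G - Fs / H) $ n = of_nat p ^ s * z"
        using \<open>pdv p s ((F / G - Fs / H) $ n)\<close> unfolding pdv_def by blast
      have "((F / G) $ n - (Fs / H) $ n) / of_nat p ^ s = z" using z(2) p0 by simp
      then show ?thesis using z(1) by simp
    qed
    then show ?thesis unfolding fps_cong_mod_def p_integral_iff[OF pr] G_def H_def Fs_def s by simp
  qed
  show ?thesis using part1 part2 unfolding hF by blast
qed

end
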